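(* Let $m\ge 3$ and let $K_{1,m}$ be the star with center $v_0$ and pendant vertices $v_1,\dots,v_m$. Then $P_{\{v_1\}}(K_{1,m})>P_{\{v_0\}}(K_{1,m})$, and consequently $\max\{P_A(K_{1,m}): A\subseteq V(K_{1,m}),\ |A|=1\}=P_{\{v_1\}}(K_{1,m})$.
   Context: Classical zero forcing: given a set of black vertices (the rest white), the color change rule turns a white vertex $v$ black if $v$ is the only white neighbor of some black vertex $u$. A set $S$ is a zero forcing set if starting with $S$ black, finitely many applications of this rule make all of $V(G)$ black. Probabilistic process: for a vertex $u$, $N(u)$ is its open neighborhood, $N[u]=N(u)\cup\{u\}$, $\deg(u)=|N(u)|$. Given a current black set $Z$, $F(u\to v)=0$ if $u\notin Z$, or $v\notin N(u)$, or $N[u]\subseteq Z$; otherwise $F(u\to v)=|N[u]\cap Z|/\deg(u)$. One global application of the probabilistic color change rule: black vertices stay black; independently for every pair $(u,v)$ with $u$ black and $v\in N(u)$ white, $u$ forces $v$ with probability $F(u\to v)$; a white vertex becomes black iff some black neighbor forces it. Starting with black set $A$ at step $0$ and applying this rule repeatedly, let $S^k$ be the set of colorings reachable with positive probability after exactly $k$ steps and $P^{(k)}$ the probability distribution on them. Let $T^k\subseteq S^k$ be the colorings whose black set contains a classical zero forcing set of $G$. Define $P_A(G)=P^{(k_0)}(T^{k_0})$ where $k_0$ is the least $k\ge 0$ with $T^k\neq\emptyset$. *)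

theory Defs
  imports "HOL-Probability.Probability"
begin

text \<open>A simple graph is given by a finite vertex set V and a symmetric irreflexive
  adjacency relation E (only its restriction to V matters).\<close>

definition nbhd :: "'a set \<Rightarrow> ('a \<Rightarrow> 'a \<Rightarrow> bool) \<Rightarrow> 'a \<Rightarrow> 'a set" where
  "nbhd V E u = {v \<in> V. E u v}"

definition cnbhd :: "'a set \<Rightarrow> ('a \<Rightarrow> 'a \<Rightarrow> bool) \<Rightarrow> 'a \<Rightarrow> 'a set" where
  "cnbhd V E u = insert u (nbhd V E u)"

definition deg :: "'a set \<Rightarrow> ('a \<Rightarrow> 'a \<Rightarrow> bool) \<Rightarrow> 'a \<Rightarrow> nat" where
  "deg V E u = card (nbhd V E u)"

inductive_set zf_closure :: "'a set \<Rightarrow> ('a \<Rightarrow> 'a \<Rightarrow> bool) \<Rightarrow> 'a set \<Rightarrow> 'a set"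
  for V E S where
  base: "x \<in> S \<Longrightarrow> x \<in> zf_closure V E S"
| force: "u \<in> zf_closure V E S \<Longrightarrow> v \<in> nbhd V E u \<Longrightarrow>
           (\<forall>w \<in> nbhd V E u. w \<noteq> v \<longrightarrow> w \<in> zf_closure V E S) \<Longrightarrow> v \<in> zf_closure V E S"

definition zero_forcing_set :: "'a set \<Rightarrow> ('a \<Rightarrow> 'a \<Rightarrow> bool) \<Rightarrow> 'a set \<Rightarrow> bool" where
  "zero_forcing_set V E S \<longleftrightarrow> S \<subseteq> V \<and> zf_closure V E S = V"

definition force_prob :: "'a set \<Rightarrow> ('a \<Rightarrow> 'a \<Rightarrow> bool) \<Rightarrow> 'a set \<Rightarrow> 'a \<Rightarrow> 'a \<Rightarrow> real" where
  "force_prob V E Z u v =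
     (if u \<notin> Z \<or> v \<notin> nbhd V E u \<or> cnbhd V E u \<subseteq> Z then 0
      else real (card (cnbhd V E u \<inter> Z)) / real (deg V E u))"

definition force_pairs :: "'a set \<Rightarrow> ('a \<Rightarrow> 'a \<Rightarrow> bool) \<Rightarrow> 'a set \<Rightarrow> ('a \<times> 'a) set" where
  "force_pairs V E Z = {(u, v). u \<in> Z \<and> v \<in> nbhd V E u \<and> v \<notin> Z}"

definition pzf_step :: "'a set \<Rightarrow> ('a \<Rightarrow> 'a \<Rightarrow> bool) \<Rightarrow> 'a set \<Rightarrow> 'a set pmf" where
  "pzf_step V E Z =
     map_pmf (\<lambda>f. Z \<union> {v. \<exists>u. (u, v) \<in> force_pairs V E Z \<and> f (u, v)})
       (Pi_pmf (force_pairs V E Z) False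
          (\<lambda>(u, v). bernoulli_pmf (force_prob V E Z u v)))"

primrec pzf_dist :: "'a set \<Rightarrow> ('a \<Rightarrow> 'a \<Rightarrow> bool) \<Rightarrow> 'a set \<Rightarrow> nat \<Rightarrow> 'a set pmf" where
  "pzf_dist V E A 0 = return_pmf A"
| "pzf_dist V E A (Suc k) = bind_pmf (pzf_dist V E A k) (pzf_step V E)"

definition pzf_T :: "'a set \<Rightarrow> ('a \<Rightarrow> 'a \<Rightarrow> bool) \<Rightarrow> 'a set \<Rightarrow> nat \<Rightarrow> 'a set set" where
  "pzf_T V E A k = {Z \<in> set_pmf (pzf_dist V E A k). \<exists>S. S \<subseteq> Z \<and> zero_forcing_set V E S}"

definition P_A :: "'a set \<Rightarrow> ('a \<Rightarrow> 'a \<Rightarrow> bool) \<Rightarrow> 'a set \<Rightarrow> real" where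
  "P_A V E A = (let k0 = (LEAST k. pzf_T V E A k \<noteq> {})
                in measure_pmf.prob (pzf_dist V E A k0) (pzf_T V E A k0))"

text \<open>The star K_{1,m}: center 0, pendant vertices 1..m.\<close>
definition star_V :: "nat \<Rightarrow> nat set" where
  "star_V m = {0..m}"

definition star_E :: "nat \<Rightarrow> nat \<Rightarrow> nat \<Rightarrow> bool" where
  "star_E m u v \<longleftrightarrow> (u = 0 \<and> v \<in> {1..m}) \<or> (v = 0 \<and> u \<in> {1..m})"

end

theory Submission
  imports Defs
begin

lemma step_form:
  assumes fp: "force_pairs V E Z = {c} \<times> W"
    and pr: "\<And>v. v \<in> W \<Longrightarrow> force_prob V E Z c v = p"
  shows "pzf_step V E Z = map_pmf (\<lambda>f. Z \<union> {v\<in>W. f (c,v)}) (Pi_pmf ({c}\<times>W) False (\<lambda>_. bernoulli_pmf p))"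
  unfolding pzf_step_def fp
  apply (intro map_pmf_cong Pi_pmf_cong)
  using pr by auto

lemma binom_tail:
  assumes "0 \<le> p" "p \<le> 1"
  shows "measure_pmf.prob (binomial_pmf (Suc k) p) {k..} = real (Suc k) * p ^ k * (1 - p) + p ^ Suc k"
proof -
  have sub: "set_pmf (binomial_pmf (Suc k) p) \<subseteq> {..Suc k}"
    using assms by (auto simp: set_pmf_binomial_eq)
  have "{k..} \<inter> set_pmf (binomial_pmf (Suc k) p) = {k, Suc k} \<inter> set_pmf (binomial_pmf (Suc k) p)"
    using sub by auto
  hence "measure_pmf.prob (binomial_pmf (Suc k) p) {k..} = measure_pmf.prob (binomial_pmf (Suc k) p) {k, Suc k}"
    by (metis measure_Int_set_pmf)
  also have "\<dots> = pmf (binomial_pmf (Suc k) p) k + pmf (binomial_pmf (Suc k) p) (Suc k)"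
    by (subst measure_measure_pmf_finite) auto
  also have "\<dots> = real (Suc k) * p ^ k * (1 - p) + p ^ Suc k"
    using assms by simp
  finally show ?thesis .
qed

lemma pi_tail:
  assumes "finite W" "card W = Suc k" "0 \<le> p" "p \<le> 1"
  shows "measure_pmf.prob (Pi_pmf ({c}\<times>W) False (\<lambda>_. bernoulli_pmf p)) {f. k \<le> card {v\<in>W. f (c,v)}}
     = real (Suc k) * p ^ k * (1 - p) + p ^ Suc k"
proof -
  have cw: "card ({c}\<times>W) = Suc k" using assms by (simp add: card_cartesian_product)
  have fin: "finite ({c}\<times>W)" using assms by simp
  have eq: "card {x\<in>{c}\<times>W. f x} = card {v\<in>W. f (c,v)}" for f
  proof -
    have "{x\<in>{c}\<times>W. f x} = (\<lambda>v. (c,v)) ` {v\<in>W. f (c,v)}" by auto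
    thus ?thesis by (simp add: card_image inj_on_def)
  qed
  have "{f. k \<le> card {v\<in>W. f (c,v)}} = (\<lambda>f. card {x\<in>{c}\<times>W. f x}) -` {k..}"
    using eq by auto
  hence "measure_pmf.prob (Pi_pmf ({c}\<times>W) False (\<lambda>_. bernoulli_pmf p)) {f. k \<le> card {v\<in>W. f (c,v)}}
     = measure_pmf.prob (map_pmf (\<lambda>f. card {x\<in>{c}\<times>W. f x}) (Pi_pmf ({c}\<times>W) False (\<lambda>_. bernoulli_pmf p))) {k..}"
    by simp
  also have "\<dots> = measure_pmf.prob (binomial_pmf (Suc k) p) {k..}"
    using binomial_pmf_altdef'[OF fin cw, of p False] assms by simp
  also have "\<dots> = real (Suc k) * p ^ k * (1 - p) + p ^ Suc k"
    using binom_tail assms by simp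
  finally show ?thesis .
qed


lemma nbhd_star: "nbhd (star_V m) (star_E m) u = (if u = 0 then {1..m} else if u \<in> {1..m} then {0} else {})"
  by (auto simp: nbhd_def star_V_def star_E_def)

lemma closure_sub: "zf_closure (star_V m) (star_E m) S \<subseteq> S \<union> star_V m"
proof
  fix x assume "x \<in> zf_closure (star_V m) (star_E m) S"
  thus "x \<in> S \<union> star_V m"
    by induction (auto simp: nbhd_def)
qed

lemma hasZF_iff:
  assumes m: "m \<ge> 2" and Z: "Z \<subseteq> star_V m"
  shows "(\<exists>S. S \<subseteq> Z \<and> zero_forcing_set (star_V m) (star_E m) S) \<longleftrightarrow> m - 1 \<le> card (Z \<inter> {1..m})"
proof
  assume "\<exists>S. S \<subseteq> Z \<and> zero_forcing_set (star_V m) (star_E m) S"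
  then obtain S where S: "S \<subseteq> Z" "zero_forcing_set (star_V m) (star_E m) S" by blast
  show "m - 1 \<le> card (Z \<inter> {1..m})"
  proof (rule ccontr)
    assume lt: "\<not> m - 1 \<le> card (Z \<inter> {1..m})"
    have cs: "card (S \<inter> {1..m}) < m - 1"
    proof -
      have "card (S \<inter> {1..m}) \<le> card (Z \<inter> {1..m})"
        using S(1) by (intro card_mono) auto
      thus ?thesis using lt by simp
    qed
    have "x \<in> S \<union> {0}" if "x \<in> zf_closure (star_V m) (star_E m) S" for x
      using that
    proof induction
      case (base x) thus ?case by simp
    next
      case (force u v)
      show ?case
      proof (cases "u = 0")
        case True
        with force have v: "v \<in> {1..m}" by (simp add: nbhd_star)
        show ?thesis
        proof (rule ccontr)
          assume nv: "v \<notin> S \<union> {0}"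
          have "{1..m} - {v} \<subseteq> S \<inter> {1..m}"
            using force True nv v by (auto simp: nbhd_star)
          hence "card ({1..m} - {v}) \<le> card (S \<inter> {1..m})"
            by (intro card_mono) auto
          moreover have "card ({1..m} - {v}) = m - 1" using v by simp
          ultimately show False using cs by simp
        qed
      next
        case False
        with force show ?thesis by (auto simp: nbhd_star split: if_splits)
      qed
    qed
    hence "star_V m \<subseteq> S \<union> {0}" using S(2) by (auto simp: zero_forcing_set_def)
    hence "{1..m} \<subseteq> S \<inter> {1..m}" by (auto simp: star_V_def)
    hence "card {1..m} \<le> card (S \<inter> {1..m})" by (intro card_mono) auto
    thus False using cs by simp
  qed
next
  assume c: "m - 1 \<le> card (Z \<inter> {1..m})"
  have "zero_forcing_set (star_V m) (star_E m) Z"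
    unfolding zero_forcing_set_def
  proof (intro conjI Z equalityI)
    show "zf_closure (star_V m) (star_E m) Z \<subseteq> star_V m" using closure_sub Z by blast
    have "Z \<inter> {1..m} \<noteq> {}" using c m by (metis Int_commute card.empty diff_is_0_eq not_numeral_le_zero not_one_le_zero numeral_le_one_iff semiring_norm(69) le_0_eq one_le_numeral diff_le_self le_trans)
    then obtain l where l: "l \<in> Z" "l \<in> {1..m}" by blast
    have z0: "0 \<in> zf_closure (star_V m) (star_E m) Z"
    proof (cases "0 \<in> Z")
      case True thus ?thesis by (rule zf_closure.base)
    next
      case False
      show ?thesis
        apply (rule zf_closure.force[of l])
        using l by (auto intro: zf_closure.base simp: nbhd_star)
    qed
    show "star_V m \<subseteq> zf_closure (star_V m) (star_E m) Z"
    proof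
      fix x assume x: "x \<in> star_V m"
      show "x \<in> zf_closure (star_V m) (star_E m) Z"
      proof (cases "x \<in> Z \<or> x = 0")
        case True thus ?thesis using z0 by (auto intro: zf_closure.base)
      next
        case False
        hence xl: "x \<in> {1..m}" "x \<notin> Z" using x by (auto simp: star_V_def)
        have others: "w \<in> Z" if "w \<in> {1..m}" "w \<noteq> x" for w
        proof (rule ccontr)
          assume "w \<notin> Z"
          hence "Z \<inter> {1..m} \<subseteq> {1..m} - {x, w}" using xl by auto
          hence "card (Z \<inter> {1..m}) \<le> card ({1..m} - {x, w})" by (intro card_mono) auto
          moreover have "card ({1..m} - {x, w}) = m - 2" using xl that by (simp add: card_Diff_subset)
          ultimately show False using c m by linarith
        qed
        show ?thesis
          apply (rule zf_closure.force[OF z0])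
          using xl others by (auto intro: zf_closure.base simp: nbhd_star)
      qed
    qed
  qed
  thus "\<exists>S. S \<subseteq> Z \<and> zero_forcing_set (star_V m) (star_E m) S" by blast
qed


lemma T_eq: "pzf_T V E A k = set_pmf (pzf_dist V E A k) \<inter> {Z. \<exists>S. S \<subseteq> Z \<and> zero_forcing_set V E S}"
  by (auto simp: pzf_T_def)

lemma prob_T: "measure_pmf.prob (pzf_dist V E A k) (pzf_T V E A k)
   = measure_pmf.prob (pzf_dist V E A k) {Z. \<exists>S. S \<subseteq> Z \<and> zero_forcing_set V E S}"
  unfolding T_eq by (subst Int_commute) (rule measure_Int_set_pmf)

lemma T0_empty:
  assumes "m \<ge> 3" "A \<subseteq> star_V m" "card (A \<inter> {1..m}) \<le> 1"
  shows "pzf_T (star_V m) (star_E m) A 0 = {}"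
proof -
  have "\<not> (\<exists>S. S \<subseteq> A \<and> zero_forcing_set (star_V m) (star_E m) S)"
    using assms hasZF_iff[of m A] by simp
  thus ?thesis unfolding pzf_T_def by simp
qed

lemma fp_center: "m \<ge> 1 \<Longrightarrow> force_pairs (star_V m) (star_E m) {0} = {0} \<times> {1..m}"
  by (auto simp: force_pairs_def nbhd_star)

lemma fprob_center: "m \<ge> 1 \<Longrightarrow> v \<in> {1..m} \<Longrightarrow> force_prob (star_V m) (star_E m) {0} 0 v = 1 / real m"
proof -
  assume m: "m \<ge> 1" and v: "v \<in> {1..m}"
  have "insert 0 {1..m} \<inter> {0} = {0::nat}" by auto
  moreover have "\<not> insert 0 {1..m} \<subseteq> {0::nat}" using m by auto
  ultimately show ?thesis using v
    by (simp add: force_prob_def cnbhd_def deg_def nbhd_star)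
qed

lemma fp_leaf1: "i \<in> {1..m} \<Longrightarrow> force_pairs (star_V m) (star_E m) {i} = {i} \<times> {0}"
  by (auto simp: force_pairs_def nbhd_star)

lemma fprob_leaf1: "i \<in> {1..m} \<Longrightarrow> force_prob (star_V m) (star_E m) {i} i 0 = 1"
proof -
  assume i: "i \<in> {1..m}"
  have "insert i {0} \<inter> {i} = {i}" by auto
  moreover have "\<not> insert i {0} \<subseteq> {i}" using i by auto
  ultimately show ?thesis using i
    by (simp add: force_prob_def cnbhd_def deg_def nbhd_star)
qed

lemma fp_leaf2: "i \<in> {1..m} \<Longrightarrow> force_pairs (star_V m) (star_E m) {0,i} = {0} \<times> ({1..m} - {i})"
  by (auto simp: force_pairs_def nbhd_star)

lemma fprob_leaf2: "m \<ge> 3 \<Longrightarrow> i \<in> {1..m} \<Longrightarrow> v \<in> {1..m} - {i} \<Longrightarrow> force_prob (star_V m) (star_E m) {0,i} 0 v = 2 / real m"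
proof -
  assume m: "m \<ge> 3" and i: "i \<in> {1..m}" and v: "v \<in> {1..m} - {i}"
  have "insert 0 {1..m} \<inter> {0,i} = {0::nat, i}" using i by auto
  moreover have "\<not> insert 0 {1..m} \<subseteq> {0::nat,i}" using v by auto
  ultimately show ?thesis using v i
    by (simp add: force_prob_def cnbhd_def deg_def nbhd_star)
qed


lemma center_prob:
  assumes m: "m \<ge> 3"
  shows "measure_pmf.prob (pzf_dist (star_V m) (star_E m) {0} 1) {Z. \<exists>S. S \<subseteq> Z \<and> zero_forcing_set (star_V m) (star_E m) S}
     = real m * (1 / real m) ^ (m - 1) * (1 - 1 / real m) + (1 / real m) ^ m"
proof -
  define R where "R = (\<lambda>f. {0::nat} \<union> {v\<in>{1..m}. f (0::nat,v)})"
  define P where "P = Pi_pmf ({0::nat}\<times>{1..m}) False (\<lambda>_. bernoulli_pmf (1 / real m))"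
  have st: "pzf_step (star_V m) (star_E m) {0} = map_pmf R P"
    unfolding R_def P_def
    by (rule step_form) (use m fp_center fprob_center in auto)
  have d: "pzf_dist (star_V m) (star_E m) {0} 1 = map_pmf R P"
    by (simp add: st bind_return_pmf)
  have pre: "R -` {Z. \<exists>S. S \<subseteq> Z \<and> zero_forcing_set (star_V m) (star_E m) S}
     = {f. m - 1 \<le> card {v\<in>{1..m}. f (0,v)}}"
  proof (rule set_eqI)
    fix f
    have sub: "R f \<subseteq> star_V m" by (auto simp: R_def star_V_def)
    have "R f \<inter> {1..m} = {v\<in>{1..m}. f (0,v)}" by (auto simp: R_def)
    thus "f \<in> R -` {Z. \<exists>S. S \<subseteq> Z \<and> zero_forcing_set (star_V m) (star_E m) S} \<longleftrightarrow> f \<in> {f. m - 1 \<le> card {v\<in>{1..m}. f (0,v)}}"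
      using hasZF_iff[OF _ sub] m by simp
  qed
  obtain k where k: "m = Suc k" using m by (cases m) auto
  have "measure_pmf.prob P {f. k \<le> card {v\<in>{1..m}. f (0,v)}} = real (Suc k) * (1 / real m) ^ k * (1 - 1 / real m) + (1 / real m) ^ Suc k"
    unfolding P_def using m k by (intro pi_tail) auto
  thus ?thesis using d pre k by simp
qed

lemma leaf_dist1:
  assumes i: "i \<in> {1..m}"
  shows "pzf_dist (star_V m) (star_E m) {i} 1 = return_pmf {0,i}"
proof -
  have st: "pzf_step (star_V m) (star_E m) {i} = map_pmf (\<lambda>f. {i} \<union> {v\<in>{0}. f (i,v)}) (Pi_pmf ({i}\<times>{0}) False (\<lambda>_. bernoulli_pmf 1))"
    by (rule step_form) (use i fp_leaf1 fprob_leaf1 in auto)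
  have "pzf_dist (star_V m) (star_E m) {i} 1 = map_pmf (\<lambda>f. {i} \<union> {v\<in>{0}. f (i,v)}) (Pi_pmf ({i}\<times>{0}) False (\<lambda>_. bernoulli_pmf 1))"
    by (simp add: st bind_return_pmf)
  also have "\<dots> = map_pmf (\<lambda>_. {0,i}) (Pi_pmf ({i}\<times>{0::nat}) False (\<lambda>_. bernoulli_pmf (1::real)))"
  proof (rule map_pmf_cong[OF refl])
    fix f assume f: "f \<in> set_pmf (Pi_pmf ({i}\<times>{0::nat}) False (\<lambda>_. bernoulli_pmf (1::real)))"
    have "f (i,0) \<in> set_pmf (bernoulli_pmf (1::real))"
      using f by (simp add: set_Pi_pmf PiE_dflt_def)
    hence "f (i,0)" by (cases "f (i,0)") (auto simp: set_pmf_iff)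
    thus "{i} \<union> {v\<in>{0}. f (i,v)} = {0,i}" by auto
  qed
  finally show ?thesis by simp
qed

lemma leaf_prob:
  assumes m: "m \<ge> 3" and i: "i \<in> {1..m}"
  shows "measure_pmf.prob (pzf_dist (star_V m) (star_E m) {i} 2) {Z. \<exists>S. S \<subseteq> Z \<and> zero_forcing_set (star_V m) (star_E m) S}
     = real (m - 1) * (2 / real m) ^ (m - 2) * (1 - 2 / real m) + (2 / real m) ^ (m - 1)"
proof -
  define W where "W = {1..m} - {i}"
  define R where "R = (\<lambda>f. {0::nat,i} \<union> {v\<in>W. f (0::nat,v)})"
  define P where "P = Pi_pmf ({0::nat}\<times>W) False (\<lambda>_. bernoulli_pmf (2 / real m))"
  have two: "(2::nat) = Suc 1" by simp
  have st: "pzf_step (star_V m) (star_E m) {0,i} = map_pmf R P"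
    unfolding R_def P_def W_def
    by (rule step_form) (use m i fp_leaf2 fprob_leaf2 in auto)
  have "pzf_dist (star_V m) (star_E m) {i} (Suc 1) = map_pmf R P"
    unfolding pzf_dist.simps(2)[of _ _ _ 1] leaf_dist1[OF i]
    by (simp add: st bind_return_pmf del: pzf_dist.simps)
  hence d: "pzf_dist (star_V m) (star_E m) {i} 2 = map_pmf R P" by (simp add: two del: pzf_dist.simps)
  have pre: "R -` {Z. \<exists>S. S \<subseteq> Z \<and> zero_forcing_set (star_V m) (star_E m) S}
     = {f. m - 2 \<le> card {v\<in>W. f (0,v)}}"
  proof (rule set_eqI)
    fix f
    have sub: "R f \<subseteq> star_V m" using i by (auto simp: R_def star_V_def W_def)
    have "R f \<inter> {1..m} = insert i {v\<in>W. f (0,v)}" using i by (auto simp: R_def W_def)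
    moreover have "card (insert i {v\<in>W. f (0,v)}) = Suc (card {v\<in>W. f (0,v)})"
      by (simp add: W_def)
    ultimately have "card (R f \<inter> {1..m}) = Suc (card {v\<in>W. f (0,v)})" by simp
    thus "f \<in> R -` {Z. \<exists>S. S \<subseteq> Z \<and> zero_forcing_set (star_V m) (star_E m) S} \<longleftrightarrow> f \<in> {f. m - 2 \<le> card {v\<in>W. f (0,v)}}"
      using hasZF_iff[OF _ sub] m by (simp; arith)
  qed
  obtain k where k: "m = Suc (Suc k)" using m by (cases m; cases "m - 1") auto
  have cW: "card W = Suc k" using i k by (simp add: W_def)
  have "measure_pmf.prob P {f. k \<le> card {v\<in>W. f (0,v)}} = real (Suc k) * (2 / real m) ^ k * (1 - 2 / real m) + (2 / real m) ^ Suc k"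
    unfolding P_def using m k cW by (intro pi_tail) (auto simp: W_def)
  thus ?thesis using d pre k by simp
qed


lemma ineq:
  assumes m: "m \<ge> (3::nat)"
  shows "real m * (1 / real m) ^ (m - 1) * (1 - 1 / real m) + (1 / real m) ^ m
     < real (m - 1) * (2 / real m) ^ (m - 2) * (1 - 2 / real m) + (2 / real m) ^ (m - 1)"
proof -
  define N where "N = m - 2"
  have N: "m = N + 2" "N \<ge> 1" using m by (auto simp: N_def)
  define r where "r = real m"
  have r: "r = real N + 2" "r \<ge> 3" using N m by (auto simp: r_def)
  define q where "q = (1 / r) ^ N"
  have q: "q > 0" using r by (simp add: q_def)
  have rnz: "r \<noteq> 0" using r by simp
  have e1: "real m * (1 / real m) ^ (m - 1) * (1 - 1 / real m) + (1 / real m) ^ m = q * ((1 - 1/r) + 1/r^2)"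
  proof -
    have a: "(1 / r) ^ (m - 1) = q * (1 / r)" "(1 / r) ^ m = q * (1/r)^2"
      unfolding q_def using N by (simp_all add: power_add power2_eq_square)
    have "r * (q * (1 / r)) * (1 - 1 / r) + q * (1/r)^2 = q * ((1 - 1/r) + 1/r^2)"
      using rnz by (simp add: field_simps power2_eq_square)
    thus ?thesis using a by (simp add: r_def)
  qed
  have e2: "real (m - 1) * (2 / real m) ^ (m - 2) * (1 - 2 / real m) + (2 / real m) ^ (m - 1)
     = (2 / r) ^ N * ((real N + 1) * (1 - 2/r) + 2/r)"
  proof -
    have a: "(2 / r) ^ (m - 1) = (2 / r) ^ N * (2 / r)" "real (m - 1) = real N + 1"
      using N by (simp_all add: power_add)
    have b: "m - 2 = N" using N by simp
    have "(real N + 1) * (2 / r) ^ N * (1 - 2 / r) + (2 / r) ^ N * (2 / r) = (2 / r) ^ N * ((real N + 1) * (1 - 2/r) + 2/r)"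
      by (simp add: algebra_simps add_divide_distrib)
    thus ?thesis using a b by (simp add: r_def)
  qed
  have p: "(2 / r) ^ N \<ge> q" unfolding q_def using r by (intro power_mono) (auto simp: divide_right_mono)
  have nr: "real N + 1 = r - 1" using r by simp
  have B: "(1 - 1/r) + 1/r^2 < (real N + 1) * (1 - 2/r) + 2/r"
  proof -
    have "r^2 * ((1 - 1/r) + 1/r^2) = r^2 - r + 1" using rnz by (simp add: field_simps power2_eq_square)
    moreover have "r^2 * ((real N + 1) * (1 - 2/r) + 2/r) = (r - 1) * r * (r - 2) + 2 * r"
      unfolding nr using rnz by (simp add: field_simps power2_eq_square)
    moreover have "r^2 - r + 1 < (r - 1) * r * (r - 2) + 2 * r"
    proof -
      have "(r - 1) * r * (r - 2) \<ge> (r - 1) * r * 1" using r by (intro mult_left_mono) auto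
      thus ?thesis using r by (simp add: power2_eq_square algebra_simps)
    qed
    ultimately have "r^2 * ((1 - 1/r) + 1/r^2) < r^2 * ((real N + 1) * (1 - 2/r) + 2/r)" by simp
    moreover have "r^2 > 0" using r by simp
    ultimately show ?thesis using mult_less_cancel_left_pos by blast
  qed
  have B2: "(1 - 1/r) + 1/r^2 \<ge> 0" using r by (simp add: field_simps)
  have "q * ((1 - 1/r) + 1/r^2) < q * ((real N + 1) * (1 - 2/r) + 2/r)" using q B by simp
  also have "\<dots> \<le> (2 / r) ^ N * ((real N + 1) * (1 - 2/r) + 2/r)"
    using p B B2 by (intro mult_right_mono) auto
  finally show ?thesis using e1 e2 by simp
qed


lemma T_ret_empty:
  assumes "m \<ge> 3" "pzf_dist (star_V m) (star_E m) B k = return_pmf A" "A \<subseteq> star_V m" "card (A \<inter> {1..m}) \<le> 1"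
  shows "pzf_T (star_V m) (star_E m) B k = {}"
proof -
  have "\<not> (\<exists>S. S \<subseteq> A \<and> zero_forcing_set (star_V m) (star_E m) S)"
    using assms hasZF_iff[of m A] by simp
  thus ?thesis unfolding pzf_T_def assms(2) by simp
qed

lemma PA_center:
  assumes m: "m \<ge> 3"
  shows "P_A (star_V m) (star_E m) {0} = real m * (1 / real m) ^ (m - 1) * (1 - 1 / real m) + (1 / real m) ^ m"
proof -
  let ?pc = "real m * (1 / real m) ^ (m - 1) * (1 - 1 / real m) + (1 / real m) ^ m"
  have T0: "pzf_T (star_V m) (star_E m) {0} 0 = {}"
    by (rule T_ret_empty) (use m in \<open>auto simp: star_V_def\<close>)
  have pos: "?pc > 0"
  proof -
    have "real m * (1 / real m) ^ (m - 1) * (1 - 1 / real m) \<ge> 0" using m by simp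
    moreover have "(1 / real m) ^ m > 0" using m by simp
    ultimately show ?thesis by linarith
  qed
  have pr: "measure_pmf.prob (pzf_dist (star_V m) (star_E m) {0} 1) (pzf_T (star_V m) (star_E m) {0} 1) = ?pc"
    unfolding prob_T by (rule center_prob[OF m])
  have T1: "pzf_T (star_V m) (star_E m) {0} 1 \<noteq> {}"
    using pr pos by auto
  have L: "(LEAST k. pzf_T (star_V m) (star_E m) {0} k \<noteq> {}) = 1"
  proof (rule Least_equality)
    show "pzf_T (star_V m) (star_E m) {0} 1 \<noteq> {}" by (rule T1)
  next
    fix y assume "pzf_T (star_V m) (star_E m) {0} y \<noteq> {}"
    thus "1 \<le> y" using T0 by (cases y) auto
  qed
  show ?thesis unfolding P_A_def Let_def L using pr by simp
qed

lemma PA_leaf: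
  assumes m: "m \<ge> 3" and i: "i \<in> {1..m}"
  shows "P_A (star_V m) (star_E m) {i} = real (m - 1) * (2 / real m) ^ (m - 2) * (1 - 2 / real m) + (2 / real m) ^ (m - 1)"
proof -
  let ?pl = "real (m - 1) * (2 / real m) ^ (m - 2) * (1 - 2 / real m) + (2 / real m) ^ (m - 1)"
  have T0: "pzf_T (star_V m) (star_E m) {i} 0 = {}"
  proof (rule T_ret_empty)
    show "card ({i} \<inter> {1..m}) \<le> 1" by (simp add: card_le_Suc0_iff_eq)
  qed (use m i in \<open>auto simp: star_V_def\<close>)
  have T1: "pzf_T (star_V m) (star_E m) {i} 1 = {}"
  proof (rule T_ret_empty[OF m leaf_dist1[OF i]])
    show "{0, i} \<subseteq> star_V m" using i by (auto simp: star_V_def)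
    have "{0, i} \<inter> {1..m} = {i}" using i by auto
    thus "card ({0, i} \<inter> {1..m}) \<le> 1" by simp
  qed
  have pos: "?pl > 0"
  proof -
    have "real (m - 1) * (2 / real m) ^ (m - 2) * (1 - 2 / real m) \<ge> 0" using m by simp
    moreover have "(2 / real m) ^ (m - 1) > 0" using m by simp
    ultimately show ?thesis by linarith
  qed
  have pr: "measure_pmf.prob (pzf_dist (star_V m) (star_E m) {i} 2) (pzf_T (star_V m) (star_E m) {i} 2) = ?pl"
    unfolding prob_T by (rule leaf_prob[OF m i])
  have T2: "pzf_T (star_V m) (star_E m) {i} 2 \<noteq> {}"
    using pr pos by auto
  have L: "(LEAST k. pzf_T (star_V m) (star_E m) {i} k \<noteq> {}) = 2"
  proof (rule Least_equality)
    show "pzf_T (star_V m) (star_E m) {i} 2 \<noteq> {}" by (rule T2)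
  next
    fix y assume "pzf_T (star_V m) (star_E m) {i} y \<noteq> {}"
    hence "y \<noteq> 0" "y \<noteq> 1" using T0 T1 by auto
    thus "2 \<le> y" by linarith
  qed
  show ?thesis unfolding P_A_def Let_def L using pr by simp
qed

lemma max2: "(a::real) < b \<Longrightarrow> Max {a, b} = b"
  by simp

theorem mainTheorem5:
  fixes m :: nat
  assumes "m \<ge> 3"
  shows "P_A (star_V m) (star_E m) {1} > P_A (star_V m) (star_E m) {0}
         \<and> Max {P_A (star_V m) (star_E m) A | A. A \<subseteq> star_V m \<and> card A = 1}
             = P_A (star_V m) (star_E m) {1}"
proof -
  define pc where "pc = real m * (1 / real m) ^ (m - 1) * (1 - 1 / real m) + (1 / real m) ^ m"
  define pl where "pl = real (m - 1) * (2 / real m) ^ (m - 2) * (1 - 2 / real m) + (2 / real m) ^ (m - 1)"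
  have i1: "(1::nat) \<in> {1..m}" using assms by simp
  have c: "P_A (star_V m) (star_E m) {0} = pc" unfolding pc_def by (rule PA_center[OF assms])
  have lf: "\<And>i. i \<in> {1..m} \<Longrightarrow> P_A (star_V m) (star_E m) {i} = pl" unfolding pl_def by (rule PA_leaf[OF assms])
  have l1: "P_A (star_V m) (star_E m) {1} = pl" by (rule lf[OF i1])
  have lt: "pc < pl" unfolding pc_def pl_def by (rule ineq[OF assms])
  have S: "{P_A (star_V m) (star_E m) A | A. A \<subseteq> star_V m \<and> card A = 1} = {pc, pl}"
  proof (rule set_eqI, rule iffI)
    fix x assume "x \<in> {P_A (star_V m) (star_E m) A | A. A \<subseteq> star_V m \<and> card A = 1}"
    then obtain A where A: "x = P_A (star_V m) (star_E m) A" "A \<subseteq> star_V m" "card A = 1" by (auto simp only: mem_Collect_eq)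
    have "\<exists>a. A = {a}" using A(3) card_1_singleton_iff[of A] by simp
    then obtain a where a: "A = {a}" by blast
    show "x \<in> {pc, pl}"
    proof (cases "a = 0")
      case True thus ?thesis using A(1) a c by simp
    next
      case False
      hence "a \<in> {1..m}" using A a by (auto simp: star_V_def)
      thus ?thesis using A(1) a lf by simp
    qed
  next
    fix x assume x: "x \<in> {pc, pl}"
    have s0: "{0::nat} \<subseteq> star_V m" "{1::nat} \<subseteq> star_V m" using assms by (auto simp: star_V_def)
    show "x \<in> {P_A (star_V m) (star_E m) A | A. A \<subseteq> star_V m \<and> card A = 1}"
    proof (cases "x = pc")
      case True
      hence "x = P_A (star_V m) (star_E m) {0}" using c by simp
      moreover have "card {0::nat} = 1" by simp
      ultimately show ?thesis using s0(1) by (intro CollectI exI[of _ "{0}"]) simp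
    next
      case False
      hence "x = P_A (star_V m) (star_E m) {1}" using x l1 by simp
      moreover have "card {1::nat} = 1" by simp
      ultimately show ?thesis using s0(2) by (intro CollectI exI[of _ "{1}"]) simp
    qed
  qed
  show ?thesis unfolding S c l1 using lt max2 by simp
qed

end
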